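(* Let $(X_1,X_2)\sim BDEW(\alpha,p,\beta_1,\beta_2,\beta_3)$ with $\alpha>0$, $0<p<1$, $\beta_1,\beta_2,\beta_3>0$. Then $$P(X_1<X_2)=\sum_{i=0}^{\infty}\Big\{[1-p^{(i+2)^{\alpha}}]^{\beta_2}-[1-p^{(i+1)^{\alpha}}]^{\beta_2}\Big\}[1-p^{(i+1)^{\alpha}}]^{\beta_1+\beta_3}.$$
   Context: The exponentiated discrete Weibull distribution $EDW(\alpha,p,\beta)$ ($\alpha,\beta>0$, $0<p<1$) is the distribution on $\mathbb{N}_0=\{0,1,2,\dots\}$ with cumulative distribution function $F_{EDW}(x;\alpha,p,\beta)=[1-p^{([x]+1)^{\alpha}}]^{\beta}$ for real $x\ge 0$, where $[x]$ is the largest integer $\le x$. The bivariate discrete exponentiated Weibull distribution $BDEW(\alpha,p,\beta_1,\beta_2,\beta_3)$ is the distribution of $(X_1,X_2)=(\max\{V_1,V_3\},\max\{V_2,V_3\})$ where $V_1,V_2,V_3$ are independent with $V_i\sim EDW(\alpha,p,\beta_i)$. *)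

theory Defs
  imports "HOL-Probability.Probability"
begin

definition edw_cdf :: "real \<Rightarrow> real \<Rightarrow> real \<Rightarrow> real \<Rightarrow> real" where
  "edw_cdf \<alpha> p \<beta> x = (1 - p powr ((real_of_int \<lfloor>x\<rfloor> + 1) powr \<alpha>)) powr \<beta>"

definition is_EDW :: "'a measure \<Rightarrow> ('a \<Rightarrow> nat) \<Rightarrow> real \<Rightarrow> real \<Rightarrow> real \<Rightarrow> bool" where
  "is_EDW M V \<alpha> p \<beta> \<longleftrightarrow>
     V \<in> measurable M (count_space UNIV) \<and>
     (\<forall>x::real. x \<ge> 0 \<longrightarrow>
        measure M {\<omega> \<in> space M. real (V \<omega>) \<le> x} = edw_cdf \<alpha> p \<beta> x)"

end

theory Submission
  imports Defs
begin

lemma edw_le: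
  assumes "is_EDW M V \<alpha> p \<beta>"
  shows "measure M {\<omega> \<in> space M. V \<omega> \<le> n} = (1 - p powr ((real n + 1) powr \<alpha>)) powr \<beta>"
proof -
  have "measure M {\<omega> \<in> space M. real (V \<omega>) \<le> real n} = edw_cdf \<alpha> p \<beta> (real n)"
    using assms unfolding is_EDW_def by (metis of_nat_0_le_iff)
  then show ?thesis by (simp add: edw_cdf_def)
qed

theorem mainTheorem4:
  fixes M :: "'a measure" and V :: "nat \<Rightarrow> 'a \<Rightarrow> nat"
    and \<alpha> p :: real and \<beta> :: "nat \<Rightarrow> real"
  assumes "prob_space M"
    and "\<alpha> > 0" and "0 < p" and "p < 1"
    and "\<forall>i\<in>{1,2,3}. \<beta> i > 0"
    and "prob_space.indep_vars M (\<lambda>_. count_space UNIV) V {1,2,3}"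
    and "\<forall>i\<in>{1,2,3}. is_EDW M (V i) \<alpha> p (\<beta> i)"
  shows "measure M {\<omega> \<in> space M. max (V 1 \<omega>) (V 3 \<omega>) < max (V 2 \<omega>) (V 3 \<omega>)} =
    (\<Sum>i::nat. ((1 - p powr ((real i + 2) powr \<alpha>)) powr (\<beta> 2)
                 - (1 - p powr ((real i + 1) powr \<alpha>)) powr (\<beta> 2))
               * (1 - p powr ((real i + 1) powr \<alpha>)) powr (\<beta> 1 + \<beta> 3))"
proof -
  interpret prob_space M by fact
  define F where "F = (\<lambda>b (n::nat). (1 - p powr ((real n + 1) powr \<alpha>)) powr b)"
  have E: "is_EDW M (V j) \<alpha> p (\<beta> j)" if "j \<in> {1,2,3}" for j using assms(7) that by blast
  have meas: "V j \<in> measurable M (count_space UNIV)" if "j \<in> {1,2,3}" for j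
    using E[OF that] unfolding is_EDW_def by blast
  have setsV: "V j -` B \<inter> space M \<in> sets M" if "j \<in> {1,2,3}" for j B
    using measurable_sets[OF meas[OF that], of B] by simp
  have le: "measure M {\<omega> \<in> space M. V j \<omega> \<le> n} = F (\<beta> j) n" if "j \<in> {1,2,3}" for j n
    using edw_le[OF E[OF that]] unfolding F_def by simp
  define S where "S = (\<lambda>i. {\<omega> \<in> space M. V 2 \<omega> = Suc i \<and> V 1 \<omega> \<le> i \<and> V 3 \<omega> \<le> i})"
  have Ssets: "S i \<in> sets M" for i
  proof -
    have "S i = (V 2 -` {Suc i} \<inter> space M) \<inter> (V 1 -` {..i} \<inter> space M) \<inter> (V 3 -` {..i} \<inter> space M)"
      unfolding S_def by auto
    then show ?thesis using setsV by auto
  qed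
  have disj: "disjoint_family S" unfolding disjoint_family_on_def S_def by auto
  have U: "{\<omega> \<in> space M. max (V 1 \<omega>) (V 3 \<omega>) < max (V 2 \<omega>) (V 3 \<omega>)} = (\<Union>i. S i)"
  proof (rule set_eqI, rule iffI)
    fix \<omega> assume "\<omega> \<in> {\<omega> \<in> space M. max (V 1 \<omega>) (V 3 \<omega>) < max (V 2 \<omega>) (V 3 \<omega>)}"
    then have "\<omega> \<in> S (V 2 \<omega> - 1)" unfolding S_def by (auto simp: max_def split: if_splits)
    then show "\<omega> \<in> (\<Union>i. S i)" by blast
  next
    fix \<omega> assume "\<omega> \<in> (\<Union>i. S i)"
    then show "\<omega> \<in> {\<omega> \<in> space M. max (V 1 \<omega>) (V 3 \<omega>) < max (V 2 \<omega>) (V 3 \<omega>)}"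
      unfolding S_def by auto
  qed
  have eq2: "measure M {\<omega> \<in> space M. V 2 \<omega> = Suc i} = F (\<beta> 2) (Suc i) - F (\<beta> 2) i" for i
  proof -
    have "{\<omega> \<in> space M. V 2 \<omega> \<le> Suc i} = {\<omega> \<in> space M. V 2 \<omega> \<le> i} \<union> {\<omega> \<in> space M. V 2 \<omega> = Suc i}"
      by auto
    moreover have "{\<omega> \<in> space M. V 2 \<omega> \<le> i} = V 2 -` {..i} \<inter> space M" by auto
    moreover have "{\<omega> \<in> space M. V 2 \<omega> = Suc i} = V 2 -` {Suc i} \<inter> space M" by auto
    moreover have "measure M ((V 2 -` {..i} \<inter> space M) \<union> (V 2 -` {Suc i} \<inter> space M)) =
        measure M (V 2 -` {..i} \<inter> space M) + measure M (V 2 -` {Suc i} \<inter> space M)"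
      using setsV[of 2] by (intro finite_measure_Union) auto
    ultimately have "measure M {\<omega> \<in> space M. V 2 \<omega> \<le> Suc i} =
        measure M {\<omega> \<in> space M. V 2 \<omega> \<le> i} + measure M {\<omega> \<in> space M. V 2 \<omega> = Suc i}"
      by simp
    then show ?thesis using le[of 2] by simp
  qed
  have mS: "measure M (S i) = (F (\<beta> 2) (Suc i) - F (\<beta> 2) i) * (F (\<beta> 1) i * F (\<beta> 3) i)" for i
  proof -
    define A where "A = (\<lambda>j. V j -` (if j = 2 then {Suc i} else {..i}) \<inter> space M)"
    have ind: "indep_sets (\<lambda>j. sigma_sets (space M) {V j -` B \<inter> space M | B. B \<in> sets (count_space UNIV)}) {1,2,3::nat}"
      using assms(6) unfolding indep_vars_def by blast
    have "prob (\<Inter>j\<in>{1,2,3}. A j) = (\<Prod>j\<in>{1,2,3}. prob (A j))"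
      by (rule indep_setsD[OF ind]) (auto simp: A_def intro!: sigma_sets.Basic)
    moreover have "(\<Inter>j\<in>{1,2,3}. A j) = S i" unfolding A_def S_def by auto
    moreover have "A 1 = {\<omega> \<in> space M. V 1 \<omega> \<le> i}" "A 3 = {\<omega> \<in> space M. V 3 \<omega> \<le> i}"
      "A 2 = {\<omega> \<in> space M. V 2 \<omega> = Suc i}" unfolding A_def by auto
    ultimately show ?thesis using le[of 1] le[of 3] eq2 by simp
  qed
  have "(\<lambda>i. measure M (S i)) sums measure M (\<Union>i. S i)"
    by (rule finite_measure_UNION) (use Ssets disj in auto)
  then have "measure M (\<Union>i. S i) = (\<Sum>i. measure M (S i))" by (simp add: sums_unique)
  also have "\<dots> = (\<Sum>i::nat. ((1 - p powr ((real i + 2) powr \<alpha>)) powr (\<beta> 2)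
                 - (1 - p powr ((real i + 1) powr \<alpha>)) powr (\<beta> 2))
               * (1 - p powr ((real i + 1) powr \<alpha>)) powr (\<beta> 1 + \<beta> 3))"
    unfolding mS F_def by (simp add: powr_add add.commute)
  finally show ?thesis using U by simp
qed

end
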